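(* Let $b$ be a prime, $m$ a positive integer, $N=b^m$, and $w\ge0$ an integer. For $k\in\mathbb{Z}$ let $$T_{N,w}(k)=\sum_{z\in\mathcal{Z}_{N,w}}\ \sum_{\substack{-N/2<h\le N/2\\ h\ne0}}\frac{e^{2\pi i h k b^{w} z/N}}{|h|}.$$ Then $$\sum_{k=1}^{N-1}\frac{|T_{N,w}(k)|}{|\mathcal{Z}_{N,w}|}\le 2b^{\min\{w,m\}}S_N.$$
   Context: $\mathcal{Z}_{N,w}=\{z\in\{1,\dots,b^{m-w}-1\}:\gcd(z,b^m)=1\}$ if $w<m$, and $\mathcal{Z}_{N,w}=\{1\}$ if $w\ge m$. $S_N=\sum_{-N/2<h\le N/2,\,h\ne0}\frac{1}{|h|}$. *)

theory Defs
  imports "HOL-Analysis.Analysis" "HOL-Computational_Algebra.Primes"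
begin

definition Zset :: "nat \<Rightarrow> nat \<Rightarrow> nat \<Rightarrow> nat set" where
  "Zset b m w = (if w < m then {z \<in> {1..b^(m-w) - 1}. gcd z (b^m) = 1} else {1})"

definition Hset :: "nat \<Rightarrow> int set" where
  "Hset N = {h::int. - real N / 2 < real_of_int h \<and> real_of_int h \<le> real N / 2 \<and> h \<noteq> 0}"

definition S_N :: "nat \<Rightarrow> real" where
  "S_N N = (\<Sum>h\<in>Hset N. 1 / real_of_int \<bar>h\<bar>)"

definition T_Nw :: "nat \<Rightarrow> nat \<Rightarrow> nat \<Rightarrow> int \<Rightarrow> complex" where
  "T_Nw b m w k = (let N = b^m in
     (\<Sum>z\<in>Zset b m w. \<Sum>h\<in>Hset N.
        exp (2 * of_real pi * \<i> * of_int h * of_int k * of_nat (b^w) * of_nat z / of_nat N)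
          / of_int \<bar>h\<bar>))"

end

theory Submission
  imports Defs
begin

lemma Zset_eq:
  assumes b: "prime b" and wm: "w < m"
  shows "Zset b m w = {..<b^(m-w)} - (\<lambda>y. b*y) ` {..<b^(m-w) div b}"
proof -
  have b1: "b > 1" using b prime_gt_1_nat by blast
  have m0: "m > 0" using wm by auto
  have cop: "gcd z (b^m) = 1 \<longleftrightarrow> \<not> b dvd z" for z
  proof -
    have "gcd z (b^m) = 1 \<longleftrightarrow> coprime z (b^m)" by (rule coprime_iff_gcd_eq_1[symmetric])
    also have "\<dots> \<longleftrightarrow> coprime z b" using m0 coprime_power_right_iff[of z b m] by blast
    also have "\<dots> \<longleftrightarrow> \<not> b dvd z"
    proof
      assume c: "coprime z b"
      show "\<not> b dvd z"
      proof
        assume "b dvd z"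
        then have "is_unit b" by (rule coprime_common_divisor[OF c]) simp
        then show False using b not_prime_unit by blast
      qed
    next
      assume "\<not> b dvd z"
      then have "coprime b z" by (rule prime_imp_coprime[OF b])
      then show "coprime z b" by (rule coprime_commute[THEN iffD1])
    qed
    finally show ?thesis .
  qed
  have bd: "b^(m-w) = b * (b^(m-w) div b)" using wm
  proof -
    obtain d where "m - w = Suc d" using wm by (metis Suc_diff_Suc)
    then show ?thesis by simp
  qed
  show ?thesis
  proof (intro set_eqI iffI)
    fix z assume "z \<in> Zset b m w"
    then have z: "1 \<le> z" "z \<le> b^(m-w) - 1" "gcd z (b^m) = 1" using wm by (auto simp: Zset_def)
    have z3: "\<not> b dvd z" using cop[THEN iffD1, OF z(3)] .
    have "z < b^(m-w)" using z(1,2) by linarith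
    moreover have "z \<notin> (\<lambda>y. b*y) ` {..<b^(m-w) div b}" using z3 by auto
    ultimately show "z \<in> {..<b^(m-w)} - (\<lambda>y. b*y) ` {..<b^(m-w) div b}" by auto
  next
    fix z assume z: "z \<in> {..<b^(m-w)} - (\<lambda>y. b*y) ` {..<b^(m-w) div b}"
    have nd: "\<not> b dvd z"
    proof
      assume "b dvd z"
      then obtain y where "z = b*y" by auto
      moreover have "y < b^(m-w) div b" using z \<open>z = b*y\<close> bd
      proof -
        have "b*y < b * (b^(m-w) div b)" using z \<open>z = b*y\<close> bd by simp
        then show ?thesis by simp
      qed
      ultimately show False using z by auto
    qed
    then have "z \<noteq> 0" by (metis dvd_0_right)
    moreover have "gcd z (b^m) = 1" using cop[THEN iffD2, OF nd] .
    moreover have "z < b^(m-w)" using z by auto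
    ultimately show "z \<in> Zset b m w" using \<open>z \<noteq> 0\<close> wm unfolding Zset_def
      by (simp only: if_True mem_Collect_eq atLeastAtMost_iff) linarith
  qed
qed


lemma exp_int_1: "exp (2 * of_real pi * \<i> * of_int j) = 1"
  by (metis exp_2pi_1_int mult.commute mult.left_commute)

lemma geom:
  assumes "n > 0"
  shows "(\<Sum>k<n. exp (2 * of_real pi * \<i> * of_int a * of_nat k / of_nat n))
         = (if int n dvd a then of_nat n else (0::complex))"
proof -
  define \<omega> where "\<omega> = exp (2 * of_real pi * \<i> * of_int a / of_nat n)"
  have t: "exp (2 * of_real pi * \<i> * of_int a * of_nat k / of_nat n) = \<omega> ^ k" for k
    unfolding \<omega>_def by (subst exp_of_nat_mult[symmetric]) (simp add: field_simps)
  have wn: "\<omega> ^ n = 1"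
    unfolding \<omega>_def using assms
    by (subst exp_of_nat_mult[symmetric]) (simp add: field_simps exp_int_1)
  show ?thesis
  proof (cases "int n dvd a")
    case True
    then obtain j where "a = int n * j" by auto
    then have "\<omega> = 1" unfolding \<omega>_def using assms
      by (simp add: field_simps exp_int_1)
    then show ?thesis using True by (simp add: t)
  next
    case False
    have "\<omega> \<noteq> 1"
    proof
      assume "\<omega> = 1"
      then obtain j :: int where "2 * pi * of_int a / of_nat n = of_int (2*j) * pi"
        unfolding \<omega>_def exp_eq_1 by auto
      then have "of_int a = real n * of_int j" using assms by (simp add: field_simps)
      then have "a = int n * j" by (metis of_int_eq_iff of_int_mult of_int_of_nat_eq)
      then show False using False by auto
    qed
    then show ?thesis using False by (simp add: t geometric_sum wn)
  qed
qed

lemma zsum: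
  assumes b: "prime b" and wm: "w < m"
  shows "(\<Sum>z\<in>Zset b m w. exp (2 * of_real pi * \<i> * of_int a * of_nat z / of_nat (b^(m-w))))
     = (if int (b^(m-w)) dvd a then of_nat (b^(m-w)) else 0)
       - (if int (b^(m-w) div b) dvd a then of_nat (b^(m-w) div b) else (0::complex))"
proof -
  define M where "M = b^(m-w)"
  define M' where "M' = M div b"
  have b1: "b > 1" using b prime_gt_1_nat by blast
  have bd: "M = b * M'"
  proof -
    obtain d where "m - w = Suc d" using wm by (metis Suc_diff_Suc)
    then show ?thesis unfolding M_def M'_def by simp
  qed
  have M0: "M > 0" unfolding M_def using b1 by simp
  have M'0: "M' > 0" using bd M0 by auto
  have sub: "(\<lambda>y. b*y) ` {..<M'} \<subseteq> {..<M}" using bd b1 by auto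
  let ?f = "\<lambda>z. exp (2 * of_real pi * \<i> * of_int a * of_nat z / of_nat M)"
  have "(\<Sum>z\<in>Zset b m w. ?f z) = (\<Sum>z\<in>{..<M}. ?f z) - (\<Sum>z\<in>(\<lambda>y. b*y) ` {..<M'}. ?f z)"
    unfolding Zset_eq[OF b wm] M_def[symmetric] M'_def[symmetric]
    by (rule sum_diff) (use sub in auto)
  also have "(\<Sum>z\<in>(\<lambda>y. b*y) ` {..<M'}. ?f z) = (\<Sum>y<M'. ?f (b*y))"
    by (subst sum.reindex) (use b1 in \<open>auto simp: inj_on_def\<close>)
  also have "\<dots> = (\<Sum>y<M'. exp (2 * of_real pi * \<i> * of_int a * of_nat y / of_nat M'))"
    using b1 by (intro sum.cong refl) (simp add: bd field_simps)
  finally show ?thesis unfolding M_def[symmetric] M'_def[symmetric]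
    using geom[OF M0, of a] geom[OF M'0, of a] by simp
qed


lemma Tform:
  assumes b: "prime b" and wm: "w < m"
  shows "T_Nw b m w k = of_real (\<Sum>h\<in>Hset (b^m).
     ((if int (b^(m-w)) dvd h*k then real (b^(m-w)) else 0)
      - (if int (b^(m-w) div b) dvd h*k then real (b^(m-w) div b) else 0)) / real_of_int \<bar>h\<bar>)"
proof -
  define M where "M = b^(m-w)"
  have b1: "b > 1" using b prime_gt_1_nat by blast
  have ab: "complex_of_int \<bar>x\<bar> = complex_of_real \<bar>real_of_int x\<bar>" for x
    by (metis of_int_abs of_real_of_int_eq)
  have NM: "b^m = b^w * M" unfolding M_def using wm by (simp add: power_add[symmetric])
  have E: "exp (2 * of_real pi * \<i> * of_int h * of_int k * of_nat (b^w) * of_nat z / of_nat (b^m))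
      = exp (2 * of_real pi * \<i> * of_int (h*k) * of_nat z / of_nat M)" for h z
    using b1 by (simp add: NM field_simps)
  have "T_Nw b m w k = (\<Sum>z\<in>Zset b m w. \<Sum>h\<in>Hset (b^m).
          exp (2 * of_real pi * \<i> * of_int (h*k) * of_nat z / of_nat M) / of_int \<bar>h\<bar>)"
    unfolding T_Nw_def Let_def E ..
  also have "\<dots> = (\<Sum>h\<in>Hset (b^m). \<Sum>z\<in>Zset b m w.
          exp (2 * of_real pi * \<i> * of_int (h*k) * of_nat z / of_nat M) / of_int \<bar>h\<bar>)"
    by (rule sum.swap)
  also have "\<dots> = (\<Sum>h\<in>Hset (b^m). (\<Sum>z\<in>Zset b m w.
          exp (2 * of_real pi * \<i> * of_int (h*k) * of_nat z / of_nat M)) / of_int \<bar>h\<bar>)"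
    by (simp add: sum_divide_distrib)
  also have "\<dots> = (\<Sum>h\<in>Hset (b^m). ((if int M dvd h*k then of_nat M else 0)
       - (if int (M div b) dvd h*k then of_nat (M div b) else (0::complex))) / of_int \<bar>h\<bar>)"
    unfolding M_def by (simp only: zsum[OF b wm])
  also have "\<dots> = of_real (\<Sum>h\<in>Hset (b^m).
     ((if int M dvd h*k then real M else 0)
      - (if int (M div b) dvd h*k then real (M div b) else 0)) / real_of_int \<bar>h\<bar>)"
    unfolding of_real_sum
    by (intro sum.cong refl) (simp add: of_real_divide of_real_diff ab)
  finally show ?thesis unfolding M_def .
qed


lemma Hset_finite: "finite (Hset N)"
proof (rule finite_subset)
  show "Hset N \<subseteq> {-int N..int N}"
  proof
    fix h assume "h \<in> Hset N"
    then have "- real N / 2 < of_int h" "of_int h \<le> real N / 2" unfolding Hset_def by auto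
    then have "- real N < of_int h" "of_int h \<le> real N" by linarith+
    then show "h \<in> {-int N..int N}" by simp
  qed
qed simp

lemma Hset_div:
  assumes h: "h \<in> Hset N" and bh: "int b dvd h" and b1: "b > 1"
  shows "h div int b \<in> Hset N"
proof -
  obtain q where q: "h = int b * q" using bh by auto
  have hq: "h div int b = q" using q b1 by simp
  have hr: "- real N / 2 < of_int h" "of_int h \<le> real N / 2" "h \<noteq> 0" using h unfolding Hset_def by auto
  have q0: "q \<noteq> 0" using hr(3) q by auto
  have hb: "(of_int h::real) = real b * of_int q" using q by simp
  have N0: "real N \<ge> 0" by simp
  have "- real N / 2 < of_int q \<and> of_int q \<le> real N / 2"
  proof (cases "q > 0")
    case True
    then have "(of_int q::real) \<le> real b * of_int q" using b1 by simp
    then show ?thesis using hr hb N0 True by linarith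
  next
    case False
    have "(real b - 1) * of_int q \<le> (0::real)"
      by (rule mult_nonneg_nonpos) (use b1 False in auto)
    then have "real b * of_int q \<le> (of_int q::real)" by (simp add: algebra_simps)
    then show ?thesis using hr hb N0 False by linarith
  qed
  then show ?thesis using q0 unfolding hq Hset_def by simp
qed

lemma Rneg:
  assumes b: "prime b" and wm: "w < m" and nk: "\<not> int (b^(m-w)) dvd k"
  shows "(\<Sum>h\<in>Hset (b^m).
     ((if int (b^(m-w)) dvd h*k then real (b^(m-w)) else 0)
      - (if int (b^(m-w) div b) dvd h*k then real (b^(m-w) div b) else 0)) / real_of_int \<bar>h\<bar>) \<le> 0"
proof -
  define M where "M = b^(m-w)"
  define M' where "M' = M div b"
  define H where "H = Hset (b^m)"
  have b1: "b > 1" using b prime_gt_1_nat by blast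
  have bd: "M = b * M'"
  proof -
    obtain d where "m - w = Suc d" using wm by (metis Suc_diff_Suc)
    then show ?thesis unfolding M_def M'_def by simp
  qed
  have fH: "finite H" unfolding H_def by (rule Hset_finite)
  define D1 where "D1 = {h\<in>H. int M dvd h*k}"
  define D2 where "D2 = {h\<in>H. int M' dvd h*k}"
  have fD2: "finite D2" unfolding D2_def using fH by simp
  have sp: "(\<Sum>h\<in>H. ((if int M dvd h*k then real M else 0)
      - (if int M' dvd h*k then real M' else 0)) / real_of_int \<bar>h\<bar>)
     = (\<Sum>h\<in>D1. real M / real_of_int \<bar>h\<bar>) - (\<Sum>h\<in>D2. real M' / real_of_int \<bar>h\<bar>)"
  proof -
    have "(\<Sum>h\<in>H. ((if int M dvd h*k then real M else 0)
      - (if int M' dvd h*k then real M' else 0)) / real_of_int \<bar>h\<bar>)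
      = (\<Sum>h\<in>H. (if int M dvd h*k then real M / real_of_int \<bar>h\<bar> else 0)
      - (if int M' dvd h*k then real M' / real_of_int \<bar>h\<bar> else 0))"
      by (intro sum.cong refl) (simp add: diff_divide_distrib)
    also have "\<dots> = (\<Sum>h\<in>H. (if int M dvd h*k then real M / real_of_int \<bar>h\<bar> else 0))
      - (\<Sum>h\<in>H. (if int M' dvd h*k then real M' / real_of_int \<bar>h\<bar> else 0))"
      by (rule sum_subtractf)
    also have "\<dots> = (\<Sum>h\<in>D1. real M / real_of_int \<bar>h\<bar>) - (\<Sum>h\<in>D2. real M' / real_of_int \<bar>h\<bar>)"
      unfolding D1_def D2_def using fH by (simp only: sum.inter_filter)
    finally show ?thesis .
  qed
  have pb: "prime (int b)" using b by simp
  have bdv: "int b dvd h" if hD: "h \<in> D1" for h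
  proof (rule ccontr)
    have h2: "int M dvd h*k" using hD unfolding D1_def by simp
    assume "\<not> int b dvd h"
    then have "coprime (int b) h" by (rule prime_imp_coprime[OF pb])
    then have "coprime (int b ^ (m-w)) h" by (simp only: coprime_power_left_iff) blast
    moreover have "int M = int b ^ (m-w)" unfolding M_def by (rule of_nat_power)
    ultimately have "coprime (int M) h" by simp
    then have "int M dvd k" using h2 coprime_dvd_mult_right_iff by blast
    then show False using nk unfolding M_def by simp
  qed
  have img: "(\<lambda>h. h div int b) ` D1 \<subseteq> D2"
  proof
    fix x assume "x \<in> (\<lambda>h. h div int b) ` D1"
    then obtain h where h: "h \<in> H" "int M dvd h*k" and x: "x = h div int b" unfolding D1_def by auto
    have "int b dvd h" using bdv h unfolding D1_def by blast
    then obtain q where q: "h = int b * q" by auto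
    have xq: "x = q" using x q b1 by simp
    have "x \<in> H" using Hset_div[OF _ \<open>int b dvd h\<close> b1] h(1) x unfolding H_def by simp
    moreover have "int M' dvd x*k"
    proof -
      have "int b * int M' dvd int b * (q*k)" using h(2) q bd by (simp add: mult.assoc)
      then show ?thesis using b1 xq by simp
    qed
    ultimately show "x \<in> D2" unfolding D2_def by simp
  qed
  have inj: "inj_on (\<lambda>h. h div int b) D1"
  proof (rule inj_onI)
    fix x y assume "x \<in> D1" "y \<in> D1" "x div int b = y div int b"
    have "int b dvd x" "int b dvd y" using bdv \<open>x \<in> D1\<close> \<open>y \<in> D1\<close> by auto
    then show "x = y" using \<open>x div int b = y div int b\<close>
      by (metis dvd_div_mult_self)
  qed
  have "(\<Sum>h\<in>D1. real M / real_of_int \<bar>h\<bar>) = (\<Sum>h\<in>D1. real M' / real_of_int \<bar>h div int b\<bar>)"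
  proof (intro sum.cong refl)
    fix h assume "h \<in> D1"
    have "int b dvd h" using bdv \<open>h \<in> D1\<close> by auto
    then obtain q where q: "h = int b * q" by auto
    then show "real M / real_of_int \<bar>h\<bar> = real M' / real_of_int \<bar>h div int b\<bar>"
      using b1 bd by (simp add: abs_mult)
  qed
  also have "\<dots> = (\<Sum>h\<in>(\<lambda>h. h div int b) ` D1. real M' / real_of_int \<bar>h\<bar>)"
    by (subst sum.reindex[OF inj]) simp
  also have "\<dots> \<le> (\<Sum>h\<in>D2. real M' / real_of_int \<bar>h\<bar>)"
    by (rule sum_mono2[OF fD2 img]) simp
  finally show ?thesis using sp unfolding M_def[symmetric] M'_def[symmetric] H_def[symmetric] by linarith
qed


lemma S_N_of_real: "(\<Sum>h\<in>Hset N. 1 / (of_int \<bar>h\<bar> :: complex)) = of_real (S_N N)"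
  unfolding S_N_def of_real_sum
  by (intro sum.cong refl) (simp add: of_real_divide, metis of_int_abs of_real_of_int_eq)

lemma Tdiv:
  assumes dv: "int (b^(m-w)) dvd k" and b0: "b \<noteq> 0"
  shows "T_Nw b m w k = of_real (real (card (Zset b m w)) * S_N (b^m))"
proof -
  obtain j where j: "k = int (b^(m-w)) * j" using dv by auto
  have pw: "b^w * b^(m-w) = b^m * b^(w-m)"
    by (cases "w < m") (simp_all add: power_add[symmetric])
  have E: "exp (2 * of_real pi * \<i> * of_int h * of_int k * of_nat (b^w) * of_nat z / of_nat (b^m)) = 1"
    if "b \<noteq> 0" for h z
  proof -
    have "2 * of_real pi * \<i> * of_int h * of_int k * of_nat (b^w) * of_nat z / of_nat (b^m)
        = 2 * of_real pi * \<i> * (of_int (h * j * int z * int (b^(w-m))) :: complex)"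
    proof -
      have "(of_nat (b^w) * of_nat (b^(m-w)) :: complex) = of_nat (b^m) * of_nat (b^(w-m))"
        by (metis pw of_nat_mult)
      then show ?thesis using that unfolding j by (simp add: field_simps)
    qed
    then show ?thesis by (simp only: exp_int_1)
  qed
  have "T_Nw b m w k = (\<Sum>z\<in>Zset b m w. \<Sum>h\<in>Hset (b^m). 1 / of_int \<bar>h\<bar>)"
    unfolding T_Nw_def Let_def E[OF b0] by simp
  also have "\<dots> = of_real (real (card (Zset b m w)) * S_N (b^m))"
    by (simp add: S_N_of_real)
  finally show ?thesis .
qed


lemma Tsum_nonneg:
  assumes b0: "b > 0"
  shows "Re (\<Sum>k\<in>{0..int (b^m) - 1}. T_Nw b m w k) \<ge> 0"
proof -
  define N where "N = b^m"
  have N0: "N > 0" unfolding N_def using b0 by simp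
  have ri: "{0..int N - 1} = int ` {..<N}"
  proof (intro set_eqI iffI)
    fix x assume "x \<in> {0..int N - 1}"
    then have "nat x \<in> {..<N}" "x = int (nat x)" by auto
    then show "x \<in> int ` {..<N}" by blast
  qed auto
  have "(\<Sum>k\<in>{0..int N - 1}. T_Nw b m w k) = (\<Sum>k<N. T_Nw b m w (int k))"
    unfolding ri by (subst sum.reindex) (auto simp: inj_on_def)
  also have "\<dots> = (\<Sum>k<N. \<Sum>z\<in>Zset b m w. \<Sum>h\<in>Hset N.
      exp (2 * of_real pi * \<i> * of_int (h * int (b^w * z)) * of_nat k / of_nat N) / of_int \<bar>h\<bar>)"
    unfolding T_Nw_def Let_def N_def[symmetric]
    by (intro sum.cong refl) (simp add: field_simps)
  also have "\<dots> = (\<Sum>z\<in>Zset b m w. \<Sum>h\<in>Hset N. \<Sum>k<N.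
      exp (2 * of_real pi * \<i> * of_int (h * int (b^w * z)) * of_nat k / of_nat N) / of_int \<bar>h\<bar>)"
    by (simp only: sum.swap[of _ "{..<N}"])
  also have "\<dots> = (\<Sum>z\<in>Zset b m w. \<Sum>h\<in>Hset N.
      (\<Sum>k<N. exp (2 * of_real pi * \<i> * of_int (h * int (b^w * z)) * of_nat k / of_nat N)) / of_int \<bar>h\<bar>)"
    by (simp only: sum_divide_distrib)
  also have "\<dots> = (\<Sum>z\<in>Zset b m w. \<Sum>h\<in>Hset N.
      of_real ((if int N dvd h * int (b^w * z) then real N else 0) / real_of_int \<bar>h\<bar>))"
    unfolding geom[OF N0]
    by (intro sum.cong refl) (simp add: of_real_divide, metis of_int_abs of_real_of_int_eq)
  also have "\<dots> = of_real (\<Sum>z\<in>Zset b m w. \<Sum>h\<in>Hset N.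
      ((if int N dvd h * int (b^w * z) then real N else 0) / real_of_int \<bar>h\<bar>))"
    by (simp only: of_real_sum)
  finally have eq: "(\<Sum>k\<in>{0..int N - 1}. T_Nw b m w k) = of_real (\<Sum>z\<in>Zset b m w. \<Sum>h\<in>Hset N.
      ((if int N dvd h * int (b^w * z) then real N else 0) / real_of_int \<bar>h\<bar>))" .
  show ?thesis unfolding N_def[symmetric] eq Re_complex_of_real
    by (intro sum_nonneg) auto
qed


theorem lemma1:
  fixes b m w :: nat
  assumes "prime b" and "m > 0"
  shows "(\<Sum>k=1..int (b^m) - 1. norm (T_Nw b m w k) / real (card (Zset b m w)))
           \<le> 2 * real b ^ (min w m) * S_N (b^m)"
proof -
  note b = assms(1)
  have b1: "b > 1" using b prime_gt_1_nat by blast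
  define N where "N = b^m"
  define M where "M = b^(m-w)"
  define P where "P = b^(min w m)"
  define c where "c = real (card (Zset b m w))"
  define S where "S = S_N N"
  define K where "K = {1..int N - 1}"
  have NMP: "N = M * P" unfolding N_def M_def P_def
    by (cases "w < m") (simp_all add: power_add[symmetric])
  have M0: "M > 0" unfolding M_def using b1 by simp
  have P0: "P > 0" unfolding P_def using b1 by simp
  have S0: "S \<ge> 0" unfolding S_def S_N_def by (intro sum_nonneg) auto
  have fZ: "finite (Zset b m w)" unfolding Zset_def by auto
  have oneZ: "1 \<in> Zset b m w"
  proof (cases "w < m")
    case True
    have "b^(m-w) \<ge> b^1" using b1 True by (intro power_increasing) auto
    then show ?thesis using True b1 unfolding Zset_def by auto
  qed (simp add: Zset_def)
  have c0: "c > 0" unfolding c_def using fZ oneZ by (auto simp: card_gt_0_iff)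
  have nrm: "norm (T_Nw b m w k) = 2 * (if int M dvd k then c * S else 0) - Re (T_Nw b m w k)" for k
  proof (cases "int M dvd k")
    case True
    have "T_Nw b m w k = of_real (c * S)" unfolding c_def S_def N_def
      using Tdiv[of b m w k] True b1 unfolding M_def by simp
    moreover have "norm (complex_of_real (c * S)) = c * S" using c0 S0 by (simp only: norm_of_real) simp
    ultimately show ?thesis using True by (simp only: Re_complex_of_real) simp
  next
    case False
    then have wm: "w < m" unfolding M_def by (cases "w < m") auto
    define R where "R = (\<Sum>h\<in>Hset (b^m).
     ((if int (b^(m-w)) dvd h*k then real (b^(m-w)) else 0)
      - (if int (b^(m-w) div b) dvd h*k then real (b^(m-w) div b) else 0)) / real_of_int \<bar>h\<bar>)"
    have T: "T_Nw b m w k = of_real R" unfolding R_def by (rule Tform[OF b wm])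
    have "R \<le> 0" unfolding R_def by (rule Rneg[OF b wm]) (use False M_def in simp)
    then show ?thesis using T False by simp
  qed
  have f1: "(\<Sum>k\<in>K. norm (T_Nw b m w k)) = 2 * (\<Sum>k\<in>K. (if int M dvd k then c * S else 0))
      - Re (\<Sum>k\<in>K. T_Nw b m w k)"
    by (simp add: nrm sum_subtractf sum_distrib_left Re_sum)
  have f2: "(\<Sum>k\<in>K. (if int M dvd k then c * S else 0)) = c * S * card {k\<in>K. int M dvd k}"
    by (simp add: sum.inter_filter[symmetric] K_def)
  have f3: "Re (\<Sum>k\<in>K. T_Nw b m w k) \<ge> - (c * S)"
  proof -
    have e: "{0..int N - 1} = insert 0 K" unfolding K_def N_def using b1 by auto
    have "Re (\<Sum>k\<in>{0..int N - 1}. T_Nw b m w k) = Re (T_Nw b m w 0) + Re (\<Sum>k\<in>K. T_Nw b m w k)"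
      unfolding e by (subst sum.insert) (auto simp: K_def)
    moreover have "Re (T_Nw b m w 0) = c * S" unfolding c_def S_def N_def
      using Tdiv[of b m w 0] b1 by simp
    moreover have "Re (\<Sum>k\<in>{0..int N - 1}. T_Nw b m w k) \<ge> 0"
      unfolding N_def by (rule Tsum_nonneg) (use b1 in simp)
    ultimately show ?thesis by linarith
  qed
  have f4: "card {k\<in>K. int M dvd k} \<le> P - 1"
  proof -
    have "{k\<in>K. int M dvd k} \<subseteq> (\<lambda>j. int M * j) ` {1..int P - 1}"
    proof
      fix k assume "k \<in> {k\<in>K. int M dvd k}"
      then have k: "1 \<le> k" "k \<le> int N - 1" "int M dvd k" unfolding K_def by auto
      then obtain j where j: "k = int M * j" by auto
      have "0 < int M * j" using k j by simp
      then have j1: "j \<ge> 1" using M0 by (simp add: zero_less_mult_iff)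
      have "int M * j < int M * int P" using k j NMP by simp
      then have "j < int P" using M0 by simp
      then show "k \<in> (\<lambda>j. int M * j) ` {1..int P - 1}" using j j1 by auto
    qed
    then have "card {k\<in>K. int M dvd k} \<le> card ((\<lambda>j. int M * j) ` {1..int P - 1})"
      by (intro card_mono) auto
    also have "\<dots> \<le> card {1..int P - 1}" by (rule card_image_le) simp
    also have "\<dots> = P - 1" by simp
    finally show ?thesis .
  qed
  have "c * S * card {k\<in>K. int M dvd k} \<le> c * S * real (P - 1)"
    using f4 c0 S0 by (intro mult_left_mono) auto
  then have "(\<Sum>k\<in>K. norm (T_Nw b m w k)) \<le> 2 * (c * S * real (P - 1)) + c * S"
    using f1 f2 f3 by linarith
  also have "\<dots> \<le> 2 * real P * S * c"
    using P0 c0 S0 by (simp add: of_nat_diff algebra_simps)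
  finally have main: "(\<Sum>k\<in>K. norm (T_Nw b m w k)) \<le> 2 * real P * S * c" .
  have "(\<Sum>k=1..int (b^m) - 1. norm (T_Nw b m w k) / real (card (Zset b m w)))
     = (\<Sum>k\<in>K. norm (T_Nw b m w k)) / c"
    unfolding K_def N_def c_def by (rule sum_divide_distrib[symmetric])
  also have "\<dots> \<le> 2 * real P * S" using main c0 by (simp add: divide_le_eq)
  finally show ?thesis unfolding P_def S_def N_def by simp
qed

end
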